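(* Let $\mathbf p$ be a map with simple boundary having $f$ interior faces, and let $v$ be the maximal valency of an interior face of $\mathbf p$. Then in any rooted planar map $\mathbf m$, every occurrence of $\mathbf p$ intersects at most $vf^2$ other occurrences of $\mathbf p$.
   Context: A planar map is a connected planar multigraph (loops and multiple edges allowed) embedded in the sphere. It is rooted if one edge is oriented, and the root face is the face to the left of the root edge. The valency of a face is the number of incident edges, bridges counted twice. A map with simple boundary is a rooted planar map whose root face is bounded by a cycle. Its other faces are interior faces. An occurrence of $\mathbf p$ in $\mathbf m$ is given by a cycle $C$ of $\mathbf m$ such that the closed region bounded by $C$ on the side not containing the root face of $\mathbf m$, with all vertices and edges inside, forms a map isomorphic to $\mathbf p$ with $C$ corresponding to the root face boundary of $\mathbf p$. The isomorphism must preserve the root face, not necessarily the root edge, and occurrences are identified with their set of interior faces. Two occurrences intersect if they share an interior face. *)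

theory Defs
  imports "HOL-Combinatorics.Orbits"
begin

text \<open>Combinatorial (rotation-system) encoding of rooted maps.\<close>

record 'd cmap =
  darts :: "'d set"
  alpha :: "'d \<Rightarrow> 'd"
  sigma :: "'d \<Rightarrow> 'd"
  root  :: 'd

definition phi :: "'d cmap \<Rightarrow> 'd \<Rightarrow> 'd" where
  "phi M = sigma M \<circ> alpha M"

definition vertices :: "'d cmap \<Rightarrow> 'd set set" where
  "vertices M = (\<lambda>x. orbit (sigma M) x) ` darts M"

definition edges :: "'d cmap \<Rightarrow> 'd set set" where
  "edges M = (\<lambda>x. orbit (alpha M) x) ` darts M"

definition faces :: "'d cmap \<Rightarrow> 'd set set" where
  "faces M = (\<lambda>x. orbit (phi M) x) ` darts M"

definition root_face :: "'d cmap \<Rightarrow> 'd set" where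
  "root_face M = orbit (phi M) (root M)"

definition interior_faces :: "'d cmap \<Rightarrow> 'd set set" where
  "interior_faces M = faces M - {root_face M}"

text \<open>Valency of a face = number of darts in it (bridges are counted twice).\<close>
definition valency :: "'d set \<Rightarrow> nat" where
  "valency F = card F"

definition connected_map :: "'d cmap \<Rightarrow> bool" where
  "connected_map M \<longleftrightarrow>
     (\<forall>x\<in>darts M. \<forall>y\<in>darts M.
        (x, y) \<in> {(a, b). a \<in> darts M \<and> (b = alpha M a \<or> b = sigma M a)}\<^sup>*)"

definition rooted_map :: "'d cmap \<Rightarrow> bool" where
  "rooted_map M \<longleftrightarrow>
     finite (darts M) \<and> root M \<in> darts M \<and>
     alpha M permutes darts M \<and> sigma M permutes darts M \<and>
     (\<forall>x\<in>darts M. alpha M (alpha M x) = x \<and> alpha M x \<noteq> x) \<and>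
     connected_map M"

definition rooted_planar_map :: "'d cmap \<Rightarrow> bool" where
  "rooted_planar_map M \<longleftrightarrow> rooted_map M \<and>
     int (card (vertices M)) - int (card (edges M)) + int (card (faces M)) = 2"

text \<open>Simple boundary: the root face is bounded by a cycle, i.e. its darts have
  pairwise distinct base vertices and no edge is traversed twice by it.\<close>
definition simple_boundary :: "'d cmap \<Rightarrow> bool" where
  "simple_boundary P \<longleftrightarrow> rooted_planar_map P \<and>
     (\<forall>r\<in>root_face P. alpha P r \<notin> root_face P) \<and>
     inj_on (\<lambda>r. orbit (sigma P) r) (root_face P)"

text \<open>An embedding of P (map with simple boundary) into M as an occurrence:
  an injective dart map commuting with the edge involution everywhere and with the
  face permutation on all darts of interior faces of P, sending distinct vertices
  of P to distinct vertices of M (so the image of the boundary is a cycle C of M),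
  and not covering the root face of M (the region is the side of C not containing
  the root face).\<close>
definition occ_embedding :: "'a cmap \<Rightarrow> 'b cmap \<Rightarrow> ('a \<Rightarrow> 'b) \<Rightarrow> bool" where
  "occ_embedding P M \<psi> \<longleftrightarrow>
     \<psi> ` darts P \<subseteq> darts M \<and>
     inj_on \<psi> (darts P) \<and>
     (\<forall>x\<in>darts P. \<psi> (alpha P x) = alpha M (\<psi> x)) \<and>
     (\<forall>x\<in>darts P - root_face P. \<psi> (phi P x) = phi M (\<psi> x)) \<and>
     (\<forall>x\<in>darts P. \<forall>y\<in>darts P.
        orbit (sigma M) (\<psi> x) = orbit (sigma M) (\<psi> y) \<longrightarrow>
        orbit (sigma P) x = orbit (sigma P) y) \<and>
     root M \<notin> \<psi> ` (darts P - root_face P)"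

text \<open>Occurrences, identified with their set of interior faces (faces of M).\<close>
definition occurrences :: "'a cmap \<Rightarrow> 'b cmap \<Rightarrow> 'b set set set" where
  "occurrences P M =
     {(\<lambda>x. orbit (phi M) (\<psi> x)) ` (darts P - root_face P) | \<psi>. occ_embedding P M \<psi>}"

end

theory Submission
  imports Defs
begin

lemma perm_orbit_eq:
  assumes "permutation f" "t \<in> orbit f s"
  shows "orbit f t = orbit f s"
proof -
  obtain n where n: "t = (f ^^ n) s" using assms orbit_altdef_permutation by fastforce
  have "orbit f ((f ^^ n) s) = orbit f s" for n
    by (induction n) (auto simp: permutation_orbit_step[OF assms(1)])
  then show ?thesis using n by simp
qed

lemma walk_lemma:
  assumes z0: "z0 = f y0"
    and link: "\<And>n. (f ^^ n) z0 \<noteq> y0 \<Longrightarrow> (g ((f ^^ n) z0) \<longleftrightarrow> g ((f ^^ Suc n) z0))"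
    and m: "g ((f ^^ m) z0)"
  shows "g ((f ^^ n) z0)"
proof -
  have bk: "g ((f ^^ k) z0) \<longrightarrow> g z0" for k
  proof (induction k)
    case 0 then show ?case by simp
  next
    case (Suc k)
    show ?case
    proof (cases "(f ^^ k) z0 = y0")
      case True
      then have "(f ^^ Suc k) z0 = z0" using z0 by simp
      then show ?thesis by simp
    next
      case False
      then show ?thesis using link[OF False] Suc by simp
    qed
  qed
  have g0: "g z0" using bk m by blast
  show ?thesis
  proof (induction n)
    case 0 then show ?case using g0 by simp
  next
    case (Suc n)
    show ?case
    proof (cases "(f ^^ n) z0 = y0")
      case True
      then have "(f ^^ Suc n) z0 = z0" using z0 by simp
      then show ?thesis using g0 by simp
    next
      case False
      then show ?thesis using link[OF False] Suc by simp
    qed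
  qed
qed

lemma phi_permutes:
  assumes "rooted_map M" shows "phi M permutes darts M"
  using assms unfolding rooted_map_def phi_def by (auto intro: permutes_compose)

lemma phi_permutation:
  assumes "rooted_map M" shows "permutation (phi M)"
  using phi_permutes[OF assms] assms unfolding rooted_map_def
  by (auto intro: permutes_imp_permutation)

lemma sigma_permutation:
  assumes "rooted_map M" shows "permutation (sigma M)"
  using assms unfolding rooted_map_def
  by (auto intro: permutes_imp_permutation)

lemma inj_phi:
  assumes "rooted_map M" shows "inj (phi M)"
  using phi_permutes[OF assms] permutes_inj by blast

lemma inj_alpha:
  assumes "rooted_map M" shows "inj (alpha M)"
  using assms permutes_inj unfolding rooted_map_def by blast

lemma inj_sigma:
  assumes "rooted_map M" shows "inj (sigma M)"
  using assms permutes_inj unfolding rooted_map_def by blast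

lemma root_face_closed:
  assumes "rooted_map P" "x \<in> darts P"
  shows "phi P x \<in> root_face P \<longleftrightarrow> x \<in> root_face P"
proof
  assume "x \<in> root_face P" then show "phi P x \<in> root_face P"
    unfolding root_face_def by (rule orbit.step)
next
  assume h: "phi P x \<in> root_face P"
  have p: "permutation (phi P)" using phi_permutation[OF assms(1)] .
  have "orbit (phi P) (phi P x) = root_face P"
    using perm_orbit_eq[OF p] h unfolding root_face_def by blast
  then have "orbit (phi P) x = root_face P" using permutation_orbit_step[OF p] by simp
  then show "x \<in> root_face P" using permutation_self_in_orbit[OF p] by blast
qed

lemma sigma_phi_alpha:
  assumes "rooted_map P" "x \<in> darts P"
  shows "sigma P x = phi P (alpha P x)"
  using assms unfolding rooted_map_def phi_def by auto


lemma occ_unique: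
  assumes sb: "simple_boundary P" and rm: "rooted_map M"
    and e1: "occ_embedding P M \<psi>1" and e2: "occ_embedding P M \<psi>2"
    and x0: "x0 \<in> darts P - root_face P" and eq0: "\<psi>1 x0 = \<psi>2 x0"
  shows "\<forall>x\<in>darts P - root_face P. \<psi>1 x = \<psi>2 x"
proof -
  define D where "D = darts P"
  define R where "R = root_face P"
  have rp: "rooted_map P" using sb unfolding simple_boundary_def rooted_planar_map_def by blast
  have aperm: "alpha P permutes D" and sperm: "sigma P permutes D" and finD: "finite D"
    and inv: "\<And>x. x \<in> D \<Longrightarrow> alpha P (alpha P x) = x"
    using rp unfolding rooted_map_def D_def by auto
  have conn: "\<And>x y. x \<in> D \<Longrightarrow> y \<in> D \<Longrightarrow>
      (x, y) \<in> {(a, b). a \<in> D \<and> (b = alpha P a \<or> b = sigma P a)}\<^sup>*"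
    using rp unfolding rooted_map_def connected_map_def D_def by blast
  have Ralpha: "\<And>r. r \<in> R \<Longrightarrow> alpha P r \<notin> R"
    using sb unfolding simple_boundary_def R_def by blast
  have Rinj: "inj_on (\<lambda>r. orbit (sigma P) r) R"
    using sb unfolding simple_boundary_def R_def by blast
  have Rcl: "\<And>x. x \<in> D \<Longrightarrow> phi P x \<in> R \<longleftrightarrow> x \<in> R"
    using root_face_closed[OF rp] unfolding D_def R_def by blast
  have sfa: "\<And>x. x \<in> D \<Longrightarrow> sigma P x = phi P (alpha P x)"
    using sigma_phi_alpha[OF rp] unfolding D_def by blast
  have aD: "\<And>x. x \<in> D \<Longrightarrow> alpha P x \<in> D" using permutes_in_image[OF aperm] by simp
  have sD: "\<And>x. x \<in> D \<Longrightarrow> sigma P x \<in> D" using permutes_in_image[OF sperm] by simp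
  have ia: "inj (alpha M)" using inj_alpha[OF rm] .
  have ip: "inj (phi M)" using inj_phi[OF rm] .
  have isg: "inj (sigma P)" using inj_sigma[OF rp] .
  have sp: "permutation (sigma P)" using sigma_permutation[OF rp] .
  have A1: "\<forall>x\<in>darts P. \<psi>1 (alpha P x) = alpha M (\<psi>1 x)"
    using e1 by (simp add: occ_embedding_def)
  have A2: "\<forall>x\<in>darts P. \<psi>2 (alpha P x) = alpha M (\<psi>2 x)"
    using e2 by (simp add: occ_embedding_def)
  have P1: "\<forall>x\<in>darts P - root_face P. \<psi>1 (phi P x) = phi M (\<psi>1 x)"
    using e1 by (simp add: occ_embedding_def)
  have P2: "\<forall>x\<in>darts P - root_face P. \<psi>2 (phi P x) = phi M (\<psi>2 x)"
    using e2 by (simp add: occ_embedding_def)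
  have a1: "\<And>x. x \<in> D \<Longrightarrow> \<psi>1 (alpha P x) = alpha M (\<psi>1 x)"
    using A1 D_def by blast
  have a2: "\<And>x. x \<in> D \<Longrightarrow> \<psi>2 (alpha P x) = alpha M (\<psi>2 x)"
    using A2 D_def by blast
  have p1: "\<And>x. x \<in> D \<Longrightarrow> x \<notin> R \<Longrightarrow> \<psi>1 (phi P x) = phi M (\<psi>1 x)"
    using P1 D_def R_def by blast
  have p2: "\<And>x. x \<in> D \<Longrightarrow> x \<notin> R \<Longrightarrow> \<psi>2 (phi P x) = phi M (\<psi>2 x)"
    using P2 D_def R_def by blast
  define good where "good d \<longleftrightarrow> (d \<notin> R \<longrightarrow> \<psi>1 d = \<psi>2 d) \<and>
      (d \<in> R \<longrightarrow> \<psi>1 (alpha P d) = \<psi>2 (alpha P d))" for d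
  have link: "good y \<longleftrightarrow> good (sigma P y)" if y: "y \<in> D" "sigma P y \<notin> R" for y
  proof -
    define a where "a = alpha P y"
    have aD': "a \<in> D" using aD y unfolding a_def by blast
    have sy: "sigma P y = phi P a" using sfa y unfolding a_def by blast
    have aR: "a \<notin> R" using Rcl aD' y sy by auto
    have "good (sigma P y) \<longleftrightarrow> \<psi>1 (phi P a) = \<psi>2 (phi P a)"
      using y sy unfolding good_def by simp
    also have "\<dots> \<longleftrightarrow> \<psi>1 a = \<psi>2 a"
      using p1[OF aD' aR] p2[OF aD' aR] ip by (simp add: inj_eq)
    finally have g1: "good (sigma P y) \<longleftrightarrow> \<psi>1 a = \<psi>2 a" .
    have "good y \<longleftrightarrow> \<psi>1 a = \<psi>2 a"
    proof (cases "y \<in> R")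
      case True then show ?thesis unfolding good_def a_def by simp
    next
      case False
      then have "good y \<longleftrightarrow> \<psi>1 y = \<psi>2 y" unfolding good_def by simp
      also have "\<dots> \<longleftrightarrow> alpha M (\<psi>1 y) = alpha M (\<psi>2 y)" using ia by (simp add: inj_eq)
      also have "\<dots> \<longleftrightarrow> \<psi>1 a = \<psi>2 a" using a1 a2 y unfolding a_def by simp
      finally show ?thesis .
    qed
    then show ?thesis using g1 by simp
  qed
  have galpha: "good (alpha P d)" if "d \<in> D" "good d" for d
    using that a1 a2 inv Ralpha unfolding good_def by (cases "d \<in> R") auto
  have gsigma: "good (sigma P d)" if d: "d \<in> D" "good d" for d
  proof -
    obtain y0 where y0: "y0 \<in> orbit (sigma P) d"
      and y0u: "\<And>y. y \<in> orbit (sigma P) d \<Longrightarrow> sigma P y \<in> R \<Longrightarrow> y = y0"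
    proof (cases "\<exists>y\<in>orbit (sigma P) d. sigma P y \<in> R")
      case True
      then obtain y0 where y0: "y0 \<in> orbit (sigma P) d" "sigma P y0 \<in> R" by blast
      have "y = y0" if "y \<in> orbit (sigma P) d" "sigma P y \<in> R" for y
      proof -
        have "orbit (sigma P) (sigma P y) = orbit (sigma P) d"
          using perm_orbit_eq[OF sp] that(1) permutation_orbit_step[OF sp] by metis
        moreover have "orbit (sigma P) (sigma P y0) = orbit (sigma P) d"
          using perm_orbit_eq[OF sp] y0(1) permutation_orbit_step[OF sp] by metis
        ultimately have "sigma P y = sigma P y0"
          using inj_onD[OF Rinj, of "sigma P y" "sigma P y0"] that(2) y0(2) by simp
        then show ?thesis using isg by (simp add: inj_eq)
      qed
      then show ?thesis using that y0 by blast
    next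
      case False
      then show ?thesis using that[of d] permutation_self_in_orbit[OF sp] by blast
    qed
    define z0 where "z0 = sigma P y0"
    have orbD: "\<And>y. y \<in> orbit (sigma P) d \<Longrightarrow> y \<in> D"
      using d(1) sperm permutes_in_funpow_image orbit_altdef_permutation[OF sp] by fastforce
    have z0o: "z0 \<in> orbit (sigma P) d" using y0 orbit.step z0_def by metis
    have lk: "good (((sigma P) ^^ n) z0) \<longleftrightarrow> good (((sigma P) ^^ Suc n) z0)"
      if "((sigma P) ^^ n) z0 \<noteq> y0" for n
    proof -
      have io: "((sigma P) ^^ n) z0 \<in> orbit (sigma P) d" using z0o funpow_in_orbit by metis
      then have "sigma P (((sigma P) ^^ n) z0) \<notin> R" using y0u that by blast
      from link[OF orbD[OF io] this] show ?thesis by simp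
    qed
    have "d \<in> orbit (sigma P) z0"
      using perm_orbit_eq[OF sp z0o] permutation_self_in_orbit[OF sp] by blast
    then obtain m where m: "d = ((sigma P) ^^ m) z0"
      using orbit_altdef_permutation[OF sp] by blast
    have gm: "good (((sigma P) ^^ m) z0)" using m d(2) by simp
    have "good (((sigma P) ^^ Suc m) z0)"
      by (rule walk_lemma[OF z0_def lk gm])
    then show ?thesis using m by simp
  qed
  have x0D: "x0 \<in> D" using x0 D_def by blast
  have gx0: "good x0" using x0 eq0 unfolding good_def R_def by simp
  have "good y" if "y \<in> D" for y
  proof -
    have "(x0, y) \<in> {(a, b). a \<in> D \<and> (b = alpha P a \<or> b = sigma P a)}\<^sup>*"
      using conn x0D that by blast
    then have "y \<in> D \<and> good y"
    proof (induction rule: rtrancl_induct)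
      case base then show ?case using x0D gx0 by simp
    next
      case (step a b)
      then show ?case using galpha gsigma aD sD by auto
    qed
    then show ?thesis by simp
  qed
  then show ?thesis unfolding good_def D_def R_def by auto
qed


lemma emb_funpow:
  assumes rp: "rooted_map P" and e: "occ_embedding P M \<psi>"
    and x: "x \<in> darts P - root_face P"
  shows "((phi P) ^^ n) x \<in> darts P - root_face P \<and>
         \<psi> (((phi P) ^^ n) x) = ((phi M) ^^ n) (\<psi> x)"
proof (induction n)
  case 0 then show ?case using x by simp
next
  case (Suc n)
  define y where "y = ((phi P) ^^ n) x"
  have y: "y \<in> darts P" "y \<notin> root_face P" "\<psi> y = ((phi M) ^^ n) (\<psi> x)"
    using Suc unfolding y_def by auto
  have "phi P y \<in> darts P"
    using permutes_in_image[OF phi_permutes[OF rp]] y(1) by simp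
  moreover have "phi P y \<notin> root_face P" using root_face_closed[OF rp y(1)] y(2) by simp
  moreover have "\<psi> (phi P y) = phi M (\<psi> y)" using e y(1,2) unfolding occ_embedding_def by blast
  ultimately show ?case using y(3) unfolding y_def by simp
qed

lemma orbit_funpow_ex:
  assumes "y \<in> orbit f x" shows "\<exists>n. y = (f ^^ n) x"
  using assms unfolding orbit_altdef by blast

theorem mainTheorem6:
  fixes P :: "'a cmap" and M :: "'b cmap"
  assumes "simple_boundary P"
    and "rooted_planar_map M"
    and "Q \<in> occurrences P M"
  shows "card {Q' \<in> occurrences P M. Q' \<noteq> Q \<and> Q' \<inter> Q \<noteq> {}}
           \<le> Max (valency ` interior_faces P) * (card (interior_faces P))\<^sup>2"
proof -
  have sb: "simple_boundary P" using assms(1) .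
  have rp: "rooted_map P" using sb unfolding simple_boundary_def rooted_planar_map_def by blast
  have rm: "rooted_map M" using assms(2) unfolding rooted_planar_map_def by blast
  define I where "I = darts P - root_face P"
  define IF where "IF = interior_faces P"
  define T where "T = {Q' \<in> occurrences P M. Q' \<noteq> Q \<and> Q' \<inter> Q \<noteq> {}}"
  define V where "V = Max (valency ` IF)"
  have pP: "permutation (phi P)" using phi_permutation[OF rp] .
  have pM: "permutation (phi M)" using phi_permutation[OF rm] .
  have finD: "finite (darts P)" using rp unfolding rooted_map_def by blast
  have finI: "finite I" using finD unfolding I_def by simp
  have finIF: "finite IF" using finD unfolding IF_def interior_faces_def faces_def by simp
  have orbD: "orbit (phi P) x \<subseteq> darts P" if "x \<in> darts P" for x
    using that permutes_in_funpow_image[OF phi_permutes[OF rp]] orbit_altdef_permutation[OF pP]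
    by fastforce
  have IFchar: "\<exists>x\<in>I. G = orbit (phi P) x" if GI: "G \<in> IF" for G
  proof -
    obtain x where x: "x \<in> darts P" "G = orbit (phi P) x" "G \<noteq> root_face P"
      using GI unfolding IF_def interior_faces_def faces_def by blast
    have "x \<notin> root_face P"
    proof
      assume "x \<in> root_face P"
      then have "orbit (phi P) x = root_face P"
        using perm_orbit_eq[OF pP] unfolding root_face_def by blast
      then show False using x by simp
    qed
    then show ?thesis using x unfolding I_def by blast
  qed
  have inIF: "orbit (phi P) x \<in> IF" if "x \<in> I" for x
  proof -
    have "orbit (phi P) x \<noteq> root_face P"
      using that permutation_self_in_orbit[OF pP, of x] unfolding I_def by blast
    then show ?thesis using that unfolding IF_def interior_faces_def faces_def I_def by blast
  qed
  define rep where "rep G = (SOME x. x \<in> I \<and> G = orbit (phi P) x)" for G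
  have rep: "rep G \<in> I \<and> G = orbit (phi P) (rep G)" if "G \<in> IF" for G
  proof -
    have "\<exists>x. x \<in> I \<and> G = orbit (phi P) x" using IFchar[OF that] by blast
    from someI_ex[OF this] show ?thesis unfolding rep_def .
  qed
  define occ where "occ \<psi> = (\<lambda>x. orbit (phi M) (\<psi> x)) ` I" for \<psi> :: "'a \<Rightarrow> 'b"
  obtain \<psi>0 where e0: "occ_embedding P M \<psi>0" and Q: "Q = occ \<psi>0"
    using assms(3) unfolding occurrences_def occ_def I_def by blast
  define pr where "pr Q' p \<longleftrightarrow> fst p \<in> IF \<and> snd p \<in> I \<and>
      (\<exists>\<psi>. occ_embedding P M \<psi> \<and> Q' = occ \<psi> \<and> \<psi> (rep (fst p)) = \<psi>0 (snd p))" for Q' p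
  have ex: "\<exists>p. pr Q' p" if QT: "Q' \<in> T" for Q'
  proof -
    obtain \<psi> where e: "occ_embedding P M \<psi>" and Q': "Q' = occ \<psi>"
      using QT unfolding T_def occurrences_def occ_def I_def by blast
    obtain F where "F \<in> Q'" "F \<in> Q" using QT unfolding T_def by blast
    then obtain x1 x2 where x1: "x1 \<in> I" "F = orbit (phi M) (\<psi> x1)"
      and x2: "x2 \<in> I" "F = orbit (phi M) (\<psi>0 x2)"
      using Q Q' unfolding occ_def by blast
    define G where "G = orbit (phi P) x1"
    have G: "G \<in> IF" using inIF[OF x1(1)] G_def by simp
    have "rep G \<in> orbit (phi P) x1" using rep[OF G] G_def
      permutation_self_in_orbit[OF pP, of "rep G"] by simp
    then obtain n where n: "rep G = ((phi P) ^^ n) x1" using orbit_funpow_ex by metis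
    have "\<psi> (rep G) = ((phi M) ^^ n) (\<psi> x1)"
      using emb_funpow[OF rp e, of x1 n] x1(1) n unfolding I_def by simp
    then have "\<psi> (rep G) \<in> F"
      using x1(2) funpow_in_orbit permutation_self_in_orbit[OF pM] by metis
    then obtain k where k: "\<psi> (rep G) = ((phi M) ^^ k) (\<psi>0 x2)"
      using x2(2) orbit_funpow_ex by metis
    have ek: "((phi P) ^^ k) x2 \<in> I \<and> \<psi>0 (((phi P) ^^ k) x2) = ((phi M) ^^ k) (\<psi>0 x2)"
      using emb_funpow[OF rp e0, of x2 k] x2(1) unfolding I_def by simp
    show ?thesis
      unfolding pr_def
      apply (rule exI[of _ "(G, ((phi P) ^^ k) x2)"])
      using G ek k e Q' by auto
  qed
  obtain h where h: "\<forall>Q'\<in>T. pr Q' (h Q')"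
    using bchoice[of T pr] ex by blast
  have injh: "inj_on h T"
  proof (rule inj_onI)
    fix Q1 Q2 assume q: "Q1 \<in> T" "Q2 \<in> T" "h Q1 = h Q2"
    obtain \<psi>1 where e1: "occ_embedding P M \<psi>1" "Q1 = occ \<psi>1"
      "\<psi>1 (rep (fst (h Q1))) = \<psi>0 (snd (h Q1))" and G1: "fst (h Q1) \<in> IF"
      using h q(1) unfolding pr_def by blast
    obtain \<psi>2 where e2: "occ_embedding P M \<psi>2" "Q2 = occ \<psi>2"
      "\<psi>2 (rep (fst (h Q2))) = \<psi>0 (snd (h Q2))"
      using h q(2) unfolding pr_def by blast
    have "\<psi>1 (rep (fst (h Q1))) = \<psi>2 (rep (fst (h Q1)))" using e1(3) e2(3) q(3) by simp
    moreover have "rep (fst (h Q1)) \<in> darts P - root_face P" using rep[OF G1] I_def by blast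
    ultimately have "\<forall>x\<in>I. \<psi>1 x = \<psi>2 x"
      using occ_unique[OF sb rm e1(1) e2(1)] unfolding I_def by blast
    then show "Q1 = Q2" using e1(2) e2(2) unfolding occ_def by (auto intro!: image_cong)
  qed
  have himg: "h ` T \<subseteq> IF \<times> I"
  proof
    fix p assume "p \<in> h ` T"
    then obtain Q' where "Q' \<in> T" "p = h Q'" by blast
    then show "p \<in> IF \<times> I" using h unfolding pr_def by (simp add: mem_Times_iff)
  qed
  have c1: "card T \<le> card IF * card I"
    using card_inj_on_le[OF injh himg] finIF finI by (simp add: card_cartesian_product)
  have "I \<subseteq> \<Union> IF"
    using inIF permutation_self_in_orbit[OF pP] by blast
  then have "card I \<le> card (\<Union> IF)"
  proof (rule card_mono[rotated])
    show "finite (\<Union> IF)"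
      using finIF IFchar orbD unfolding I_def
      by (metis DiffD1 finD finite_Union finite_subset)
  qed
  also have "\<dots> \<le> sum card IF" by (rule card_Union_le_sum_card)
  also have "\<dots> \<le> card IF * V"
  proof -
    have "\<And>G. G \<in> IF \<Longrightarrow> card G \<le> V"
      unfolding V_def valency_def using finIF by (auto intro!: Max_ge)
    then show ?thesis using sum_bounded_above[of IF card V] by simp
  qed
  finally have "card I \<le> card IF * V" .
  then have "card T \<le> card IF * (card IF * V)"
    using c1 by (meson le_trans mult_le_mono2)
  then show ?thesis unfolding T_def V_def IF_def by (simp add: power2_eq_square mult.commute mult.left_commute)
qed

end
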